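(* Let $\mathcal{A}$ be an alternative $W^{*}$-factor, $\mathcal{B}$ an alternative complex $\ast$-algebra, and $\Phi:\mathcal{A}\to\mathcal{B}$ a bijection preserving product $ab+ba^{*}$ (resp. $ab-ba^{*}$). Let $p_{1}\in\mathcal{A}$ be a projection with $p_{1}\neq 1_{\mathcal{A}}$, $p_{2}=1_{\mathcal{A}}-p_{1}$, and $\mathcal{A}_{ij}=p_{i}\mathcal{A}p_{j}$. Then $\Phi(a_{11}+b_{12}+c_{21}+d_{22})=\Phi(a_{11})+\Phi(b_{12})+\Phi(c_{21})+\Phi(d_{22})$ for all $a_{11}\in\mathcal{A}_{11}$, $b_{12}\in\mathcal{A}_{12}$, $c_{21}\in\mathcal{A}_{21}$, $d_{22}\in\mathcal{A}_{22}$.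
   Context: An alternative $W^{*}$-factor is a prime alternative $C^{*}$-algebra (complete normed alternative complex $\ast$-algebra with $\|a^{*}a\|=\|a\|^{2}$) that is a dual Banach space; it is unital. A projection is a nonzero self-adjoint idempotent. $\mathcal{A}_{ij}$ are the Peirce components with respect to $p_{1}$. $\Phi$ preserves product $ab+ba^{*}$ (resp. $ab-ba^{*}$) if $\Phi(ab+ba^{*})=\Phi(a)\Phi(b)+\Phi(b)\Phi(a)^{*}$ (resp. $\Phi(ab-ba^{*})=\Phi(a)\Phi(b)-\Phi(b)\Phi(a)^{*}$) for all $a,b\in\mathcal{A}$. *)

theory Defs
  imports Complex_Main
begin

text \<open>Nonassociative algebras are given by explicit operations on a carrier type
  whose additive group structure is the type's own: complex scalar multiplication
  sc, product mul, involution st, norm nrm.\<close>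

definition complex_module :: "(complex \<Rightarrow> 'a::ab_group_add \<Rightarrow> 'a) \<Rightarrow> bool" where
  "complex_module sc \<longleftrightarrow>
     (\<forall>c x y. sc c (x + y) = sc c x + sc c y) \<and>
     (\<forall>c d x. sc (c + d) x = sc c x + sc d x) \<and>
     (\<forall>c d x. sc (c * d) x = sc c (sc d x)) \<and>
     (\<forall>x. sc 1 x = x)"

definition complex_algebra ::
  "(complex \<Rightarrow> 'a::ab_group_add \<Rightarrow> 'a) \<Rightarrow> ('a \<Rightarrow> 'a \<Rightarrow> 'a) \<Rightarrow> bool" where
  "complex_algebra sc mul \<longleftrightarrow> complex_module sc \<and>
     (\<forall>x y z. mul (x + y) z = mul x z + mul y z) \<and>
     (\<forall>x y z. mul x (y + z) = mul x y + mul x z) \<and>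
     (\<forall>c x y. mul (sc c x) y = sc c (mul x y)) \<and>
     (\<forall>c x y. mul x (sc c y) = sc c (mul x y))"

definition alternative_algebra ::
  "(complex \<Rightarrow> 'a::ab_group_add \<Rightarrow> 'a) \<Rightarrow> ('a \<Rightarrow> 'a \<Rightarrow> 'a) \<Rightarrow> bool" where
  "alternative_algebra sc mul \<longleftrightarrow> complex_algebra sc mul \<and>
     (\<forall>x y. mul (mul x x) y = mul x (mul x y)) \<and>
     (\<forall>x y. mul (mul y x) x = mul y (mul x x))"

definition alt_star_algebra ::
  "(complex \<Rightarrow> 'a::ab_group_add \<Rightarrow> 'a) \<Rightarrow> ('a \<Rightarrow> 'a \<Rightarrow> 'a) \<Rightarrow> ('a \<Rightarrow> 'a) \<Rightarrow> bool" where
  "alt_star_algebra sc mul st \<longleftrightarrow> alternative_algebra sc mul \<and>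
     (\<forall>x y. st (x + y) = st x + st y) \<and>
     (\<forall>c x. st (sc c x) = sc (cnj c) (st x)) \<and>
     (\<forall>x. st (st x) = x) \<and>
     (\<forall>x y. st (mul x y) = mul (st y) (st x))"

definition alt_C_star_algebra ::
  "(complex \<Rightarrow> 'a::ab_group_add \<Rightarrow> 'a) \<Rightarrow> ('a \<Rightarrow> 'a \<Rightarrow> 'a) \<Rightarrow> ('a \<Rightarrow> 'a) \<Rightarrow> ('a \<Rightarrow> real) \<Rightarrow> bool" where
  "alt_C_star_algebra sc mul st nrm \<longleftrightarrow> alt_star_algebra sc mul st \<and>
     (\<forall>x. nrm x = 0 \<longleftrightarrow> x = 0) \<and>
     (\<forall>x y. nrm (x + y) \<le> nrm x + nrm y) \<and>
     (\<forall>c x. nrm (sc c x) = cmod c * nrm x) \<and>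
     (\<forall>x y. nrm (mul x y) \<le> nrm x * nrm y) \<and>
     (\<forall>X :: nat \<Rightarrow> 'a. (\<forall>e>0. \<exists>N. \<forall>m\<ge>N. \<forall>n\<ge>N. nrm (X m - X n) < e) \<longrightarrow>
        (\<exists>L. (\<lambda>n. nrm (X n - L)) \<longlonglongrightarrow> 0)) \<and>
     (\<forall>x. nrm (mul (st x) x) = (nrm x)\<^sup>2)"

definition alg_ideal ::
  "(complex \<Rightarrow> 'a::ab_group_add \<Rightarrow> 'a) \<Rightarrow> ('a \<Rightarrow> 'a \<Rightarrow> 'a) \<Rightarrow> 'a set \<Rightarrow> bool" where
  "alg_ideal sc mul I \<longleftrightarrow> 0 \<in> I \<and>
     (\<forall>x\<in>I. \<forall>y\<in>I. x + y \<in> I) \<and>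
     (\<forall>c. \<forall>x\<in>I. sc c x \<in> I) \<and>
     (\<forall>x\<in>I. \<forall>a. mul a x \<in> I \<and> mul x a \<in> I)"

definition prime_algebra ::
  "(complex \<Rightarrow> 'a::ab_group_add \<Rightarrow> 'a) \<Rightarrow> ('a \<Rightarrow> 'a \<Rightarrow> 'a) \<Rightarrow> bool" where
  "prime_algebra sc mul \<longleftrightarrow> (UNIV :: 'a set) \<noteq> {0} \<and>
     (\<forall>I J. alg_ideal sc mul I \<and> alg_ideal sc mul J \<and> I \<noteq> {0} \<and> J \<noteq> {0} \<longrightarrow>
        (\<exists>x\<in>I. \<exists>y\<in>J. mul x y \<noteq> 0))"

definition bdd_lin_fun ::
  "(complex \<Rightarrow> 'a::ab_group_add \<Rightarrow> 'a) \<Rightarrow> ('a \<Rightarrow> real) \<Rightarrow> ('a \<Rightarrow> complex) \<Rightarrow> bool" where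
  "bdd_lin_fun sc nrm f \<longleftrightarrow>
     (\<forall>x y. f (x + y) = f x + f y) \<and> (\<forall>c x. f (sc c x) = c * f x) \<and>
     (\<exists>K. \<forall>x. cmod (f x) \<le> K * nrm x)"

definition fun_norm :: "('a \<Rightarrow> real) \<Rightarrow> ('a \<Rightarrow> complex) \<Rightarrow> real" where
  "fun_norm nrm f = Sup {cmod (f x) | x. nrm x \<le> 1}"

text \<open>Dual Banach space: there is a norm-closed subspace F of the dual of A (a predual)
  such that the canonical map A \<rightarrow> F*, a \<mapsto> (f \<mapsto> f a), is an isometric
  linear bijection onto F*.  (A \<cong> E* for a Banach space E iff this holds, taking
  F the image of E in A*.)\<close>
definition dual_banach_space ::
  "(complex \<Rightarrow> 'a::ab_group_add \<Rightarrow> 'a) \<Rightarrow> ('a \<Rightarrow> real) \<Rightarrow> bool" where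
  "dual_banach_space sc nrm \<longleftrightarrow>
     (\<exists>F. F \<subseteq> {f. bdd_lin_fun sc nrm f} \<and> (\<lambda>_. 0) \<in> F \<and>
        (\<forall>f\<in>F. \<forall>g\<in>F. (\<lambda>x. f x + g x) \<in> F) \<and>
        (\<forall>c. \<forall>f\<in>F. (\<lambda>x. c * f x) \<in> F) \<and>
        (\<forall>X f. (\<forall>n. X n \<in> F) \<and> bdd_lin_fun sc nrm f \<and>
             (\<lambda>n. fun_norm nrm (\<lambda>x. X n x - f x)) \<longlonglongrightarrow> 0 \<longrightarrow> f \<in> F) \<and>
        (\<forall>\<phi> :: ('a \<Rightarrow> complex) \<Rightarrow> complex.
           (\<forall>f\<in>F. \<forall>g\<in>F. \<phi> (\<lambda>x. f x + g x) = \<phi> f + \<phi> g) \<and>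
           (\<forall>c. \<forall>f\<in>F. \<phi> (\<lambda>x. c * f x) = c * \<phi> f) \<and>
           (\<exists>K. \<forall>f\<in>F. cmod (\<phi> f) \<le> K * fun_norm nrm f) \<longrightarrow>
           (\<exists>a. \<forall>f\<in>F. \<phi> f = f a)) \<and>
        (\<forall>a. nrm a = Sup {cmod (f a) | f. f \<in> F \<and> fun_norm nrm f \<le> 1}))"

definition alt_W_star_factor ::
  "(complex \<Rightarrow> 'a::ab_group_add \<Rightarrow> 'a) \<Rightarrow> ('a \<Rightarrow> 'a \<Rightarrow> 'a) \<Rightarrow> ('a \<Rightarrow> 'a) \<Rightarrow> ('a \<Rightarrow> real) \<Rightarrow> bool" where
  "alt_W_star_factor sc mul st nrm \<longleftrightarrow>
     alt_C_star_algebra sc mul st nrm \<and> prime_algebra sc mul \<and> dual_banach_space sc nrm"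

definition alg_unit :: "('a \<Rightarrow> 'a \<Rightarrow> 'a) \<Rightarrow> 'a \<Rightarrow> bool" where
  "alg_unit mul u \<longleftrightarrow> (\<forall>x. mul u x = x \<and> mul x u = x)"

definition is_projection :: "('a::zero \<Rightarrow> 'a \<Rightarrow> 'a) \<Rightarrow> ('a \<Rightarrow> 'a) \<Rightarrow> 'a \<Rightarrow> bool" where
  "is_projection mul st p \<longleftrightarrow> p \<noteq> 0 \<and> st p = p \<and> mul p p = p"

definition peirce :: "('a \<Rightarrow> 'a \<Rightarrow> 'a) \<Rightarrow> 'a \<Rightarrow> 'a \<Rightarrow> 'a set" where
  "peirce mul p q = {mul (mul p a) q | a. True}"

end

theory Submission
  imports Defs
begin

lemma probe:
  fixes \<Phi> :: "'a \<Rightarrow> 'b::ab_group_add"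
  assumes hom: "\<forall>a b. \<Phi> (P a b) = G (\<Phi> a) (\<Phi> b)"
    and Gl: "\<forall>x y z. G (x+y) z = G x z + G y z" and Gr: "\<forall>x y z. G x (y+z) = G x y + G x z"
    and e: "\<Phi> T = \<Phi> x1 + \<Phi> x2 + \<Phi> x3 + \<Phi> x4"
  shows "\<Phi> (P a T) = \<Phi> (P a x1) + \<Phi> (P a x2) + \<Phi> (P a x3) + \<Phi> (P a x4)"
    and "\<Phi> (P T b) = \<Phi> (P x1 b) + \<Phi> (P x2 b) + \<Phi> (P x3 b) + \<Phi> (P x4 b)"
  using hom Gl Gr e by simp_all

locale altp =
  fixes sc :: "complex \<Rightarrow> 'a::ab_group_add \<Rightarrow> 'a" and mul :: "'a \<Rightarrow> 'a \<Rightarrow> 'a"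
    and st :: "'a \<Rightarrow> 'a" and one p q :: 'a
  assumes sc_add: "\<And>c x y. sc c (x+y) = sc c x + sc c y"
    and sc_add2: "\<And>c d x. sc (c+d) x = sc c x + sc d x"
    and sc_mult: "\<And>c d x. sc (c*d) x = sc c (sc d x)"
    and sc_one: "\<And>x. sc 1 x = x"
    and mul_addl: "\<And>x y z. mul (x+y) z = mul x z + mul y z"
    and mul_addr: "\<And>x y z. mul x (y+z) = mul x y + mul x z"
    and mul_scl: "\<And>c x y. mul (sc c x) y = sc c (mul x y)"
    and mul_scr: "\<And>c x y. mul x (sc c y) = sc c (mul x y)"
    and altl: "\<And>x y. mul (mul x x) y = mul x (mul x y)"
    and altr: "\<And>x y. mul (mul y x) x = mul y (mul x x)"
    and st_add: "\<And>x y. st (x+y) = st x + st y"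
    and st_sc: "\<And>c x. st (sc c x) = sc (cnj c) (st x)"
    and st_st: "\<And>x. st (st x) = x"
    and st_mul: "\<And>x y. st (mul x y) = mul (st y) (st x)"
    and unitl: "\<And>x. mul one x = x" and unitr: "\<And>x. mul x one = x"
    and p_st: "st p = p" and pp: "mul p p = p" and q_def: "q = one - p"
begin

lemma mul_0l[simp]: "mul 0 x = 0"
  using mul_addl[of 0 0 x] by simp
lemma mul_0r[simp]: "mul x 0 = 0"
  using mul_addr[of x 0 0] by simp
lemma mul_negl: "mul (-x) y = - mul x y"
  using mul_addl[of x "-x" y] by (simp add: eq_neg_iff_add_eq_0 add.commute)
lemma mul_negr: "mul y (-x) = - mul y x"
  using mul_addr[of y x "-x"] by (simp add: eq_neg_iff_add_eq_0 add.commute)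
lemma mul_diffl: "mul (x - y) z = mul x z - mul y z"
  using mul_addl[of x "-y" z] by (simp add: mul_negl)
lemma mul_diffr: "mul z (x - y) = mul z x - mul z y"
  using mul_addr[of z x "-y"] by (simp add: mul_negr)
lemma st_0[simp]: "st 0 = 0"
  using st_add[of 0 0] by simp
lemma st_neg: "st (-x) = - st x"
  using st_add[of x "-x"] by (simp add: eq_neg_iff_add_eq_0 add.commute)
lemma st_diff: "st (x - y) = st x - st y"
  using st_add[of x "-y"] by (simp add: st_neg)
lemma sc_0[simp]: "sc c 0 = 0"
  using sc_add[of c 0 0] by simp
lemma sc_0l: "sc 0 x = 0"
  using sc_add2[of 0 0 x] by simp
lemma sc_negc: "sc (-c) x = - sc c x"
  using sc_add2[of "-c" c x] by (simp add: sc_0l eq_neg_iff_add_eq_0 add.commute)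
lemma sc_neg: "sc c (-x) = - sc c x"
  using sc_add[of c x "-x"] by (simp add: eq_neg_iff_add_eq_0 add.commute)
lemma sc_diff: "sc c (x - y) = sc c x - sc c y"
  using sc_add[of c x "-y"] by (simp add: sc_neg)
lemma sc_cancel: assumes "c \<noteq> 0" "sc c x = sc c y" shows "x = y"
proof -
  have "sc (inverse c) (sc c x) = sc (inverse c) (sc c y)" using assms by simp
  thus ?thesis using assms(1) by (simp add: sc_mult[symmetric] sc_one)
qed
lemma four_cancel: assumes "(x::'a) + x + x + x = y + y + y + y" shows "x = y"
proof -
  have 4: "sc 4 z = z + z + z + z" for z
  proof -
    have "sc (1+1+1+1) z = z + z + z + z" by (simp only: sc_add2 sc_one)
    thus ?thesis by simp
  qed
  show ?thesis using sc_cancel[of "4::complex" x y] assms by (simp add: 4)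
qed

lemma flex: "mul (mul x y) x = mul x (mul y x)"
proof -
  have "mul (mul (x+y) (x+y)) x = mul (x+y) (mul (x+y) x)" by (rule altl)
  hence "mul (mul x y) x + mul (mul y x) x = mul x (mul y x) + mul y (mul x x)"
    by (simp add: mul_addl mul_addr altl algebra_simps)
  thus ?thesis by (simp add: altr)
qed

lemma st_one: "st one = one"
proof -
  have "mul (st one) y = y" for y
    using st_mul[of "st y" one] by (simp add: st_st unitr)
  hence "mul (st one) one = one" by simp
  thus ?thesis by (simp add: unitr)
qed
lemma q_st: "st q = q" by (simp add: q_def st_diff st_one p_st)
lemma pq: "mul p q = 0" by (simp add: q_def mul_diffr unitr pp)
lemma qp: "mul q p = 0" by (simp add: q_def mul_diffl unitl pp)
lemma qq: "mul q q = q" by (simp add: q_def mul_diffl mul_diffr unitl unitr pp)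
lemma p_def: "p = one - q" by (simp add: q_def)

lemma pe1: "mul e e = e \<Longrightarrow> mul e (mul (mul e a) e) = mul (mul e a) e"
  by (metis altl flex)
lemma pe2: "mul e e = e \<Longrightarrow> mul (mul (mul e a) e) e = mul (mul e a) e"
  by (metis altr)
lemma pe_diag: assumes "mul e e = e" "f = one - e"
  shows "mul e (mul (mul e a) e) = mul (mul e a) e" "mul (mul (mul e a) e) e = mul (mul e a) e"
    "mul f (mul (mul e a) e) = 0" "mul (mul (mul e a) e) f = 0"
  using pe1[OF assms(1)] pe2[OF assms(1)] assms(2)
  by (auto simp: mul_diffl mul_diffr unitl unitr)
lemma pe_off: assumes "mul e e = e" "f = one - e"
  shows "mul e (mul (mul e a) f) = mul (mul e a) f" "mul (mul (mul e a) f) e = 0"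
    "mul f (mul (mul e a) f) = 0" "mul (mul (mul e a) f) f = mul (mul e a) f"
proof -
  have a: "mul e (mul e a) = mul e a" using altl[of e a] assms(1) by simp
  show 1: "mul e (mul (mul e a) f) = mul (mul e a) f"
    using pe1[OF assms(1), of a] a assms(2) by (simp add: mul_diffr mul_diffl unitr unitl)
  show 2: "mul (mul (mul e a) f) e = 0"
    using pe2[OF assms(1), of a] assms(2) by (simp add: mul_diffr mul_diffl unitr unitl)
  show "mul f (mul (mul e a) f) = 0" using 1 assms(2) by (simp add: mul_diffl unitl)
  show "mul (mul (mul e a) f) f = mul (mul e a) f" using 2 assms(2) by (simp add: mul_diffr unitr)
qed

definition "b11 x \<longleftrightarrow> mul p x = x \<and> mul q x = 0 \<and> mul x p = x \<and> mul x q = 0"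
definition "b12 x \<longleftrightarrow> mul p x = x \<and> mul q x = 0 \<and> mul x p = 0 \<and> mul x q = x"
definition "b21 x \<longleftrightarrow> mul p x = 0 \<and> mul q x = x \<and> mul x p = x \<and> mul x q = 0"
definition "b22 x \<longleftrightarrow> mul p x = 0 \<and> mul q x = x \<and> mul x p = 0 \<and> mul x q = x"

lemma blk11: "b11 (mul (mul p a) p)" unfolding b11_def using pe_diag[OF pp q_def] by auto
lemma blk12: "b12 (mul (mul p a) q)" unfolding b12_def using pe_off[OF pp q_def] by auto
lemma blk21: "b21 (mul (mul q a) p)" unfolding b21_def using pe_off[OF qq p_def] by auto
lemma blk22: "b22 (mul (mul q a) q)" unfolding b22_def using pe_diag[OF qq p_def] by auto

lemma decomp: "T = mul (mul p T) p + mul (mul p T) q + mul (mul q T) p + mul (mul q T) q"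
proof -
  have "mul (mul p T) p + mul (mul p T) q = mul p T" 
    by (simp add: mul_addr[symmetric] q_def unitr)
  moreover have "mul (mul q T) p + mul (mul q T) q = mul q T" 
    by (simp add: mul_addr[symmetric] q_def unitr)
  moreover have "mul p T + mul q T = T" by (simp add: mul_addl[symmetric] q_def unitl)
  ultimately show ?thesis by (simp add: add.assoc)
qed

lemma stp: "mul p (st x) = st (mul x p)" "mul q (st x) = st (mul x q)"
  "mul (st x) p = st (mul p x)" "mul (st x) q = st (mul q x)"
  by (simp_all add: st_mul p_st q_st)

lemma st11: "b11 x \<Longrightarrow> b11 (st x)" unfolding b11_def by (simp add: stp)
lemma st12: "b12 x \<Longrightarrow> b21 (st x)" unfolding b12_def b21_def by (simp add: stp)
lemma st21: "b21 x \<Longrightarrow> b12 (st x)" unfolding b12_def b21_def by (simp add: stp)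
lemma st22: "b22 x \<Longrightarrow> b22 (st x)" unfolding b22_def by (simp add: stp)

lemma comps:
  assumes h: "b11 x11" "b12 x12" "b21 x21" "b22 x22" and T: "T = x11 + x12 + x21 + x22"
  shows "mul p (mul T q + mul q (st T)) + mul (mul T q + mul q (st T)) p = x12 + st x12"
    "mul q (mul T p + mul p (st T)) + mul (mul T p + mul p (st T)) q = x21 + st x21"
    "mul p (mul T q - mul q (st T)) + mul (mul T q - mul q (st T)) p = x12 - st x12"
    "mul q (mul T p - mul p (st T)) + mul (mul T p - mul p (st T)) q = x21 - st x21"
    "mul p (mul (p - q) T + mul T (p - q)) + mul (mul (p - q) T + mul T (p - q)) p
       = x11 + x11 + x11 + x11"
    "mul q (mul (p - q) T + mul T (p - q)) + mul (mul (p - q) T + mul T (p - q)) q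
       = - (x22 + x22 + x22 + x22)"
proof -
  have s: "b11 (st x11)" "b21 (st x12)" "b12 (st x21)" "b22 (st x22)"
    using h st11 st12 st21 st22 by auto
  note E = h[unfolded b11_def b12_def b21_def b22_def] s[unfolded b11_def b12_def b21_def b22_def]
  note S = T mul_addl mul_addr mul_diffl mul_diffr st_add E
  show "mul p (mul T q + mul q (st T)) + mul (mul T q + mul q (st T)) p = x12 + st x12"
    by (simp add: S algebra_simps)
  show "mul q (mul T p + mul p (st T)) + mul (mul T p + mul p (st T)) q = x21 + st x21"
    by (simp add: S algebra_simps)
  show "mul p (mul T q - mul q (st T)) + mul (mul T q - mul q (st T)) p = x12 - st x12"
    by (simp add: S algebra_simps)
  show "mul q (mul T p - mul p (st T)) + mul (mul T p - mul p (st T)) q = x21 - st x21"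
    by (simp add: S algebra_simps)
  show "mul p (mul (p - q) T + mul T (p - q)) + mul (mul (p - q) T + mul T (p - q)) p
       = x11 + x11 + x11 + x11"
    by (simp add: S algebra_simps)
  show "mul q (mul (p - q) T + mul T (p - q)) + mul (mul (p - q) T + mul T (p - q)) q
       = - (x22 + x22 + x22 + x22)"
    by (simp add: S algebra_simps)
qed

lemma zero_blk: "b11 0" "b12 0" "b21 0" "b22 0"
  unfolding b11_def b12_def b21_def b22_def by auto

lemma ext12: "b12 x \<Longrightarrow> b21 (st x) \<Longrightarrow> mul (mul p (x + st x)) q = x"
  "b12 x \<Longrightarrow> b21 (st x) \<Longrightarrow> mul (mul p (x - st x)) q = x"
  unfolding b12_def b21_def by (simp_all add: mul_addl mul_addr mul_diffl mul_diffr)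
lemma ext21: "b21 x \<Longrightarrow> b12 (st x) \<Longrightarrow> mul (mul q (x + st x)) p = x"
  "b21 x \<Longrightarrow> b12 (st x) \<Longrightarrow> mul (mul q (x - st x)) p = x"
  unfolding b12_def b21_def by (simp_all add: mul_addl mul_addr mul_diffl mul_diffr)

lemma plus_case:
  fixes \<Phi> :: "'a \<Rightarrow> 'b::ab_group_add"
  assumes inj: "inj \<Phi>" and Z: "\<Phi> 0 = 0"
    and hom: "\<forall>a b. \<Phi> (mul a b + mul b (st a)) = G (\<Phi> a) (\<Phi> b)"
    and Gl: "\<forall>x y z. G (x+y) z = G x z + G y z" and Gr: "\<forall>x y z. G x (y+z) = G x y + G x z"
    and h: "b11 xa" "b12 xb" "b21 xc" "b22 xd"
    and e: "\<Phi> T = \<Phi> xa + \<Phi> xb + \<Phi> xc + \<Phi> xd"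
  shows "T = xa + xb + xc + xd"
proof -
  define P where "P = (\<lambda>a b. mul a b + mul b (st a))"
  have hom': "\<forall>a b. \<Phi> (P a b) = G (\<Phi> a) (\<Phi> b)" using hom by (simp add: P_def)
  define t11 where "t11 = mul (mul p T) p"
  define t12 where "t12 = mul (mul p T) q"
  define t21 where "t21 = mul (mul q T) p"
  define t22 where "t22 = mul (mul q T) q"
  have ht: "b11 t11" "b12 t12" "b21 t21" "b22 t22"
    unfolding t11_def t12_def t21_def t22_def by (rule blk11 blk12 blk21 blk22)+
  have T: "T = t11 + t12 + t21 + t22" unfolding t11_def t12_def t21_def t22_def by (rule decomp)
  note pr = probe[OF hom' Gl Gr]
  note z = zero_blk
  have A1: "\<And>x. P p (P x q) = mul p (mul x q + mul q (st x)) + mul (mul x q + mul q (st x)) p"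
    by (simp add: P_def p_st)
  have A2: "\<And>x. P q (P x p) = mul q (mul x p + mul p (st x)) + mul (mul x p + mul p (st x)) q"
    by (simp add: P_def q_st)
  have pq_st: "st (p - q) = p - q" by (simp add: st_diff p_st q_st)
  have A3: "\<And>x. P p (P (p - q) x) = mul p (mul (p - q) x + mul x (p - q)) + mul (mul (p - q) x + mul x (p - q)) p"
    by (simp add: P_def p_st pq_st)
  have A4: "\<And>x. P q (P (p - q) x) = mul q (mul (p - q) x + mul x (p - q)) + mul (mul (p - q) x + mul x (p - q)) q"
    by (simp add: P_def q_st pq_st)
  have "\<Phi> (P p (P T q)) = \<Phi> (P p (P xa q)) + \<Phi> (P p (P xb q)) + \<Phi> (P p (P xc q)) + \<Phi> (P p (P xd q))"
    by (rule pr(1)[OF pr(2)[OF e]])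
  hence "\<Phi> (t12 + st t12) = \<Phi> (xb + st xb)"
    unfolding A1 using comps(1)[OF ht T] comps(1)[OF h(1) z(2,3,4) refl]
      comps(1)[OF z(1) h(2) z(3,4) refl] comps(1)[OF z(1,2) h(3) z(4) refl]
      comps(1)[OF z(1,2,3) h(4) refl] by (simp add: Z)
  hence "t12 + st t12 = xb + st xb" using inj by (simp add: inj_eq)
  hence 12: "t12 = xb" using ext12(1)[OF ht(2) st12[OF ht(2)]] ext12(1)[OF h(2) st12[OF h(2)]] by metis
  have "\<Phi> (P q (P T p)) = \<Phi> (P q (P xa p)) + \<Phi> (P q (P xb p)) + \<Phi> (P q (P xc p)) + \<Phi> (P q (P xd p))"
    by (rule pr(1)[OF pr(2)[OF e]])
  hence "\<Phi> (t21 + st t21) = \<Phi> (xc + st xc)"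
    unfolding A2 using comps(2)[OF ht T] comps(2)[OF h(1) z(2,3,4) refl]
      comps(2)[OF z(1) h(2) z(3,4) refl] comps(2)[OF z(1,2) h(3) z(4) refl]
      comps(2)[OF z(1,2,3) h(4) refl] by (simp add: Z)
  hence "t21 + st t21 = xc + st xc" using inj by (simp add: inj_eq)
  hence 21: "t21 = xc" using ext21(1)[OF ht(3) st21[OF ht(3)]] ext21(1)[OF h(3) st21[OF h(3)]] by metis
  have "\<Phi> (P p (P (p - q) T)) = \<Phi> (P p (P (p - q) xa)) + \<Phi> (P p (P (p - q) xb)) + \<Phi> (P p (P (p - q) xc)) + \<Phi> (P p (P (p - q) xd))"
    by (rule pr(1)[OF pr(1)[OF e]])
  hence "\<Phi> (t11 + t11 + t11 + t11) = \<Phi> (xa + xa + xa + xa)"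
    unfolding A3 using comps(5)[OF ht T] comps(5)[OF h(1) z(2,3,4) refl]
      comps(5)[OF z(1) h(2) z(3,4) refl] comps(5)[OF z(1,2) h(3) z(4) refl]
      comps(5)[OF z(1,2,3) h(4) refl] by (simp add: Z)
  hence "t11 + t11 + t11 + t11 = xa + xa + xa + xa" using inj by (simp add: inj_eq)
  hence 11: "t11 = xa" by (rule four_cancel)
  have "\<Phi> (P q (P (p - q) T)) = \<Phi> (P q (P (p - q) xa)) + \<Phi> (P q (P (p - q) xb)) + \<Phi> (P q (P (p - q) xc)) + \<Phi> (P q (P (p - q) xd))"
    by (rule pr(1)[OF pr(1)[OF e]])
  hence "\<Phi> (- (t22 + t22 + t22 + t22)) = \<Phi> (- (xd + xd + xd + xd))"
    unfolding A4 using comps(6)[OF ht T] comps(6)[OF h(1) z(2,3,4) refl]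
      comps(6)[OF z(1) h(2) z(3,4) refl] comps(6)[OF z(1,2) h(3) z(4) refl]
      comps(6)[OF z(1,2,3) h(4) refl] by (simp add: Z)
  hence "- (t22 + t22 + t22 + t22) = - (xd + xd + xd + xd)" using inj by (metis injD)
  hence "t22 + t22 + t22 + t22 = xd + xd + xd + xd" by (metis neg_equal_iff_equal)
  hence 22: "t22 = xd" by (rule four_cancel)
  show ?thesis using T 11 12 21 22 by simp
qed

lemma pc: "x \<in> peirce mul p p \<Longrightarrow> b11 x" "x \<in> peirce mul p q \<Longrightarrow> b12 x"
  "x \<in> peirce mul q p \<Longrightarrow> b21 x" "x \<in> peirce mul q q \<Longrightarrow> b22 x"
  unfolding peirce_def using blk11 blk12 blk21 blk22 by auto

lemma Mi: "st a = a \<Longrightarrow> mul (sc \<i> a) y - mul y (st (sc \<i> a)) = sc \<i> (mul a y + mul y a)"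
  by (simp add: st_sc mul_scl mul_scr sc_negc sc_add mul_negr)
lemma Dsc: "mul a (sc c z) + mul (sc c z) a = sc c (mul a z + mul z a)"
  by (simp add: mul_scl mul_scr sc_add)

lemma minus_case:
  fixes \<Phi> :: "'a \<Rightarrow> 'b::ab_group_add"
  assumes inj: "inj \<Phi>" and Z: "\<Phi> 0 = 0"
    and hom: "\<forall>a b. \<Phi> (mul a b - mul b (st a)) = G (\<Phi> a) (\<Phi> b)"
    and Gl: "\<forall>x y z. G (x+y) z = G x z + G y z" and Gr: "\<forall>x y z. G x (y+z) = G x y + G x z"
    and h: "b11 xa" "b12 xb" "b21 xc" "b22 xd"
    and e: "\<Phi> T = \<Phi> xa + \<Phi> xb + \<Phi> xc + \<Phi> xd"
  shows "T = xa + xb + xc + xd"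
proof -
  define P where "P = (\<lambda>a b. mul a b - mul b (st a))"
  have hom': "\<forall>a b. \<Phi> (P a b) = G (\<Phi> a) (\<Phi> b)" using hom by (simp add: P_def)
  define t11 where "t11 = mul (mul p T) p"
  define t12 where "t12 = mul (mul p T) q"
  define t21 where "t21 = mul (mul q T) p"
  define t22 where "t22 = mul (mul q T) q"
  have ht: "b11 t11" "b12 t12" "b21 t21" "b22 t22"
    unfolding t11_def t12_def t21_def t22_def by (rule blk11 blk12 blk21 blk22)+
  have T: "T = t11 + t12 + t21 + t22" unfolding t11_def t12_def t21_def t22_def by (rule decomp)
  note pr = probe[OF hom' Gl Gr]
  note z = zero_blk
  have pq_st: "st (p - q) = p - q" by (simp add: st_diff p_st q_st)
  have i0: "\<i> \<noteq> 0" by simp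
  have A1: "\<And>x. P (sc \<i> p) (P x q) = sc \<i> (mul p (mul x q - mul q (st x)) + mul (mul x q - mul q (st x)) p)"
    unfolding P_def by (rule Mi[OF p_st])
  have A2: "\<And>x. P (sc \<i> q) (P x p) = sc \<i> (mul q (mul x p - mul p (st x)) + mul (mul x p - mul p (st x)) q)"
    unfolding P_def by (rule Mi[OF q_st])
  have A3: "\<And>x. P (sc \<i> p) (P (sc \<i> (p - q)) x) = sc \<i> (sc \<i> (mul p (mul (p - q) x + mul x (p - q)) + mul (mul (p - q) x + mul x (p - q)) p))"
    unfolding P_def by (simp only: Mi[OF p_st] Mi[OF pq_st] Dsc)
  have A4: "\<And>x. P (sc \<i> q) (P (sc \<i> (p - q)) x) = sc \<i> (sc \<i> (mul q (mul (p - q) x + mul x (p - q)) + mul (mul (p - q) x + mul x (p - q)) q))"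
    unfolding P_def by (simp only: Mi[OF q_st] Mi[OF pq_st] Dsc)
  have "\<Phi> (P (sc \<i> p) (P T q)) = \<Phi> (P (sc \<i> p) (P xa q)) + \<Phi> (P (sc \<i> p) (P xb q)) + \<Phi> (P (sc \<i> p) (P xc q)) + \<Phi> (P (sc \<i> p) (P xd q))"
    by (rule pr(1)[OF pr(2)[OF e]])
  hence "\<Phi> (sc \<i> (t12 - st t12)) = \<Phi> (sc \<i> (xb - st xb))"
    unfolding A1 using comps(3)[OF ht T] comps(3)[OF h(1) z(2,3,4) refl]
      comps(3)[OF z(1) h(2) z(3,4) refl] comps(3)[OF z(1,2) h(3) z(4) refl]
      comps(3)[OF z(1,2,3) h(4) refl] by (simp add: Z)
  hence "sc \<i> (t12 - st t12) = sc \<i> (xb - st xb)" using inj by (metis injD)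
  hence "t12 - st t12 = xb - st xb" by (rule sc_cancel[OF i0])
  hence 12: "t12 = xb" using ext12(2)[OF ht(2) st12[OF ht(2)]] ext12(2)[OF h(2) st12[OF h(2)]] by metis
  have "\<Phi> (P (sc \<i> q) (P T p)) = \<Phi> (P (sc \<i> q) (P xa p)) + \<Phi> (P (sc \<i> q) (P xb p)) + \<Phi> (P (sc \<i> q) (P xc p)) + \<Phi> (P (sc \<i> q) (P xd p))"
    by (rule pr(1)[OF pr(2)[OF e]])
  hence "\<Phi> (sc \<i> (t21 - st t21)) = \<Phi> (sc \<i> (xc - st xc))"
    unfolding A2 using comps(4)[OF ht T] comps(4)[OF h(1) z(2,3,4) refl]
      comps(4)[OF z(1) h(2) z(3,4) refl] comps(4)[OF z(1,2) h(3) z(4) refl]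
      comps(4)[OF z(1,2,3) h(4) refl] by (simp add: Z)
  hence "sc \<i> (t21 - st t21) = sc \<i> (xc - st xc)" using inj by (metis injD)
  hence "t21 - st t21 = xc - st xc" by (rule sc_cancel[OF i0])
  hence 21: "t21 = xc" using ext21(2)[OF ht(3) st21[OF ht(3)]] ext21(2)[OF h(3) st21[OF h(3)]] by metis
  have "\<Phi> (P (sc \<i> p) (P (sc \<i> (p - q)) T)) = \<Phi> (P (sc \<i> p) (P (sc \<i> (p - q)) xa)) + \<Phi> (P (sc \<i> p) (P (sc \<i> (p - q)) xb)) + \<Phi> (P (sc \<i> p) (P (sc \<i> (p - q)) xc)) + \<Phi> (P (sc \<i> p) (P (sc \<i> (p - q)) xd))"
    by (rule pr(1)[OF pr(1)[OF e]])
  hence "\<Phi> (sc \<i> (sc \<i> (t11 + t11 + t11 + t11))) = \<Phi> (sc \<i> (sc \<i> (xa + xa + xa + xa)))"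
    unfolding A3 using comps(5)[OF ht T] comps(5)[OF h(1) z(2,3,4) refl]
      comps(5)[OF z(1) h(2) z(3,4) refl] comps(5)[OF z(1,2) h(3) z(4) refl]
      comps(5)[OF z(1,2,3) h(4) refl] by (simp add: Z)
  hence "sc \<i> (sc \<i> (t11 + t11 + t11 + t11)) = sc \<i> (sc \<i> (xa + xa + xa + xa))" using inj by (metis injD)
  hence "sc \<i> (t11 + t11 + t11 + t11) = sc \<i> (xa + xa + xa + xa)" by (rule sc_cancel[OF i0])
  hence "t11 + t11 + t11 + t11 = xa + xa + xa + xa" by (rule sc_cancel[OF i0])
  hence 11: "t11 = xa" by (rule four_cancel)
  have "\<Phi> (P (sc \<i> q) (P (sc \<i> (p - q)) T)) = \<Phi> (P (sc \<i> q) (P (sc \<i> (p - q)) xa)) + \<Phi> (P (sc \<i> q) (P (sc \<i> (p - q)) xb)) + \<Phi> (P (sc \<i> q) (P (sc \<i> (p - q)) xc)) + \<Phi> (P (sc \<i> q) (P (sc \<i> (p - q)) xd))"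
    by (rule pr(1)[OF pr(1)[OF e]])
  hence "\<Phi> (sc \<i> (sc \<i> (- (t22 + t22 + t22 + t22)))) = \<Phi> (sc \<i> (sc \<i> (- (xd + xd + xd + xd))))"
    unfolding A4 using comps(6)[OF ht T] comps(6)[OF h(1) z(2,3,4) refl]
      comps(6)[OF z(1) h(2) z(3,4) refl] comps(6)[OF z(1,2) h(3) z(4) refl]
      comps(6)[OF z(1,2,3) h(4) refl] by (simp add: Z)
  hence "sc \<i> (sc \<i> (- (t22 + t22 + t22 + t22))) = sc \<i> (sc \<i> (- (xd + xd + xd + xd)))" using inj by (metis injD)
  hence "sc \<i> (- (t22 + t22 + t22 + t22)) = sc \<i> (- (xd + xd + xd + xd))" by (rule sc_cancel[OF i0])
  hence "- (t22 + t22 + t22 + t22) = - (xd + xd + xd + xd)" by (rule sc_cancel[OF i0])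
  hence "t22 + t22 + t22 + t22 = xd + xd + xd + xd" by (metis neg_equal_iff_equal)
  hence 22: "t22 = xd" by (rule four_cancel)
  show ?thesis using T 11 12 21 22 by simp
qed

end

theorem claim2p4:
  fixes scA :: "complex \<Rightarrow> 'a::ab_group_add \<Rightarrow> 'a" and mulA :: "'a \<Rightarrow> 'a \<Rightarrow> 'a"
    and stA :: "'a \<Rightarrow> 'a" and nrmA :: "'a \<Rightarrow> real" and one :: 'a
    and scB :: "complex \<Rightarrow> 'b::ab_group_add \<Rightarrow> 'b" and mulB :: "'b \<Rightarrow> 'b \<Rightarrow> 'b"
    and stB :: "'b \<Rightarrow> 'b"
    and \<Phi> :: "'a \<Rightarrow> 'b" and p1 p2 a11 b12 c21 d22 :: 'a
  assumes A: "alt_W_star_factor scA mulA stA nrmA"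
    and unit: "alg_unit mulA one"
    and B: "alt_star_algebra scB mulB stB"
    and bij: "bij \<Phi>"
    and pres: "(\<forall>a b. \<Phi> (mulA a b + mulA b (stA a)) = mulB (\<Phi> a) (\<Phi> b) + mulB (\<Phi> b) (stB (\<Phi> a)))
             \<or> (\<forall>a b. \<Phi> (mulA a b - mulA b (stA a)) = mulB (\<Phi> a) (\<Phi> b) - mulB (\<Phi> b) (stB (\<Phi> a)))"
    and p1: "is_projection mulA stA p1" and p1_ne: "p1 \<noteq> one"
    and p2: "p2 = one - p1"
    and a11: "a11 \<in> peirce mulA p1 p1" and b12: "b12 \<in> peirce mulA p1 p2"
    and c21: "c21 \<in> peirce mulA p2 p1" and d22: "d22 \<in> peirce mulA p2 p2"
  shows "\<Phi> (a11 + b12 + c21 + d22) = \<Phi> a11 + \<Phi> b12 + \<Phi> c21 + \<Phi> d22"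
proof -
  have Am: "alt_star_algebra scA mulA stA" using A unfolding alt_W_star_factor_def alt_C_star_algebra_def by blast
  note Ad = Am[unfolded alt_star_algebra_def alternative_algebra_def complex_algebra_def complex_module_def]
  interpret altp scA mulA stA one p1 p2
    apply unfold_locales
    using Ad unit p1 p2 unfolding alg_unit_def is_projection_def by auto
  note Bd = B[unfolded alt_star_algebra_def alternative_algebra_def complex_algebra_def complex_module_def]
  have Bl: "mulB (x+y) z = mulB x z + mulB y z" for x y z using Bd by auto
  have Br: "mulB x (y+z) = mulB x y + mulB x z" for x y z using Bd by auto
  have Bs: "stB (x+y) = stB x + stB y" for x y using Bd by auto
  have B0l: "mulB 0 x = 0" for x using Bl[of 0 0 x] by simp
  have B0r: "mulB x 0 = 0" for x using Br[of x 0 0] by simp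
  have Bs0: "stB 0 = 0" using Bs[of 0 0] by simp
  have inj: "inj \<Phi>" and sj: "surj \<Phi>" using bij bij_is_inj bij_is_surj by auto
  obtain z where z: "\<Phi> z = 0" using sj by (metis surjD)
  note h = pc(1)[OF a11] pc(2)[OF b12] pc(3)[OF c21] pc(4)[OF d22]
  define T where "T = inv \<Phi> (\<Phi> a11 + \<Phi> b12 + \<Phi> c21 + \<Phi> d22)"
  have e: "\<Phi> T = \<Phi> a11 + \<Phi> b12 + \<Phi> c21 + \<Phi> d22" unfolding T_def using sj by (simp add: surj_f_inv_f)
  have "T = a11 + b12 + c21 + d22"
    using pres
  proof
    assume H: "\<forall>a b. \<Phi> (mulA a b + mulA b (stA a)) = mulB (\<Phi> a) (\<Phi> b) + mulB (\<Phi> b) (stB (\<Phi> a))"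
    have Z: "\<Phi> 0 = 0" using H[rule_format, of z 0] z by (simp add: B0l B0r Bs0)
    show ?thesis
      by (rule plus_case[OF inj Z H _ _ h e]) (simp_all add: Bl Br Bs algebra_simps)
  next
    assume H: "\<forall>a b. \<Phi> (mulA a b - mulA b (stA a)) = mulB (\<Phi> a) (\<Phi> b) - mulB (\<Phi> b) (stB (\<Phi> a))"
    have Z: "\<Phi> 0 = 0" using H[rule_format, of z 0] z by (simp add: B0l B0r Bs0)
    show ?thesis
      by (rule minus_case[OF inj Z H _ _ h e]) (simp_all add: Bl Br Bs algebra_simps)
  qed
  thus ?thesis using e by simp
qed

end
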